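(* For each integer $N\ge0$, the set of series $X=\sum_{p,q\ge0}x_{p,q}a^pb^q\in\widehat{\mathcal{A}}$ such that there exist $R>1$ and $C_R>0$ with $$|x_{p,q}|\le C_RR^{p+q}\frac{(p+q)!}{p!}(1+p+q)^N\qquad\forall p,q\ge0$$ is equal to the algebra $\tilde{\mathcal{A}}_{conv.}$.
   Context: $\widehat{\mathcal{A}}$ is the algebra of formal power series $\sum_{p,q\ge0}\gamma_{p,q}a^pb^q$ in variables $a,b$ with $ab-ba=b^2$ (the $(a,b)$-adic completion of the polynomial algebra with this relation). $\tilde{\mathcal{A}}_{conv.}\subset\widehat{\mathcal{A}}$ is the subalgebra of series with $|\gamma_{p,q}|\le C_RR^{p+q}q!$ for some $R>1$, $C_R>0$. *)

theory Defs
  imports Complex_Main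
begin

text \<open>An element of the completed algebra hat A (generators a, b with ab - ba = b^2)
is identified with its family of coefficients in the normally ordered basis a^p b^q:
X = sum over p,q of x p q times a^p b^q.\<close>

type_synonym Ahat = "nat \<Rightarrow> nat \<Rightarrow> complex"

definition A_conv :: "Ahat set" where
  "A_conv = {x. \<exists>R>1. \<exists>C>0. \<forall>p q. norm (x p q) \<le> C * R ^ (p + q) * fact q}"

end

theory Submission
  imports Defs
begin

lemma fact_split: "real (fact (p+q)) = real ((p+q) choose q) * fact p * fact q"
proof -
  have "fact q * fact (p + q - q) * ((p+q) choose q) = (fact (p+q) :: nat)"
    by (rule binomial_fact_lemma) simp
  hence "real (fact q * fact p * ((p+q) choose q)) = real (fact (p+q))" by simp
  thus ?thesis by (simp add: of_nat_mult algebra_simps)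
qed

lemma ratio_eq: "(fact (p+q) / fact p :: real) = real ((p+q) choose q) * fact q"
  using fact_split[of p q] by (simp add: field_simps)

lemma ratio_ge: "(fact q :: real) \<le> fact (p+q) / fact p"
proof -
  have "1 \<le> real ((p+q) choose q)" by (simp add: Suc_leI)
  hence "1 * (fact q::real) \<le> real ((p+q) choose q) * fact q"
    by (intro mult_right_mono) auto
  thus ?thesis by (simp add: ratio_eq)
qed

lemma ratio_le: "(fact (p+q) / fact p :: real) \<le> 2 ^ (p+q) * fact q"
proof -
  have "real ((p+q) choose q) \<le> 2 ^ (p+q)"
    using binomial_le_pow2[of "p+q" q] by (metis of_nat_le_iff of_nat_numeral of_nat_power)
  thus ?thesis by (simp add: ratio_eq mult_right_mono)
qed

lemma pow_bound: "(1 + real n) ^ N \<le> (2 ^ N) ^ n"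
proof -
  have "1 + real n \<le> 2 ^ n"
  proof (induction n)
    case (Suc n) thus ?case by simp
  qed simp
  hence "(1 + real n) ^ N \<le> (2 ^ n) ^ N" by (intro power_mono) auto
  thus ?thesis by (simp add: power_mult[symmetric] mult.commute)
qed

theorem lemma1p1p6:
  fixes N :: nat
  shows "{x :: Ahat. \<exists>R>(1::real). \<exists>C>(0::real). \<forall>p q.
            norm (x p q) \<le> C * R ^ (p + q) * (fact (p + q) / fact p) * (1 + real p + real q) ^ N}
         = A_conv"
proof (intro equalityI subsetI)
  fix x assume "x \<in> {x :: Ahat. \<exists>R>(1::real). \<exists>C>(0::real). \<forall>p q.
            norm (x p q) \<le> C * R ^ (p + q) * (fact (p + q) / fact p) * (1 + real p + real q) ^ N}"
  then obtain R C where R: "R > (1::real)" and C: "C > (0::real)" and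
    b: "\<And>p q. norm (x p q) \<le> C * R ^ (p + q) * (fact (p + q) / fact p) * (1 + real p + real q) ^ N"
    by auto
  have "\<forall>p q. norm (x p q) \<le> C * (R * 2 * 2^N) ^ (p + q) * fact q"
  proof (intro allI)
    fix p q
    have "norm (x p q) \<le> C * R ^ (p + q) * (fact (p + q) / fact p) * (1 + real p + real q) ^ N" by (rule b)
    also have "\<dots> \<le> C * R ^ (p + q) * (2 ^ (p+q) * fact q) * (2 ^ N) ^ (p+q)"
      using pow_bound[of "p+q" N] ratio_le[of p q] R C
      by (intro mult_mono) (auto simp: add.assoc)
    also have "\<dots> = C * (R * 2 * 2^N) ^ (p + q) * fact q"
      by (simp add: power_mult_distrib)
    finally show "norm (x p q) \<le> C * (R * 2 * 2^N) ^ (p + q) * fact q" .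
  qed
  moreover have "R * 2 * 2^N > 1"
  proof -
    have "(1::real) \<le> 2^N" by simp
    hence "R * 2 \<le> R * 2 * 2^N" using R by simp
    thus ?thesis using R by linarith
  qed
  ultimately show "x \<in> A_conv" unfolding A_conv_def using C by blast
next
  fix x assume "x \<in> A_conv"
  then obtain R C where R: "R > (1::real)" and C: "C > (0::real)" and
    b: "\<And>p q. norm (x p q) \<le> C * R ^ (p + q) * fact q"
    unfolding A_conv_def by auto
  have "\<forall>p q. norm (x p q) \<le> C * R ^ (p + q) * (fact (p + q) / fact p) * (1 + real p + real q) ^ N"
  proof (intro allI)
    fix p q
    have "norm (x p q) \<le> C * R ^ (p + q) * fact q" by (rule b)
    also have "\<dots> \<le> C * R ^ (p + q) * (fact (p + q) / fact p) * 1"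
      using mult_left_mono[OF ratio_ge[of q p], of "C * R ^ (p + q)"] R C by simp
    also have "\<dots> \<le> C * R ^ (p + q) * (fact (p + q) / fact p) * (1 + real p + real q) ^ N"
      using R C by (intro mult_left_mono) (auto intro: one_le_power)
    finally show "norm (x p q) \<le> C * R ^ (p + q) * (fact (p + q) / fact p) * (1 + real p + real q) ^ N" .
  qed
  thus "x \<in> {x :: Ahat. \<exists>R>(1::real). \<exists>C>(0::real). \<forall>p q.
            norm (x p q) \<le> C * R ^ (p + q) * (fact (p + q) / fact p) * (1 + real p + real q) ^ N}"
    using R C by blast
qed

end
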